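(* Let $P,Q,R\in D$ be non-collinear and let $m\in\mathbb{Z}_{\ge0}$ be the number of triangles inscribed in $S^1$ and circumscribing $\triangle PQR$. Then $$m=\begin{cases}0 & \text{if } \delta(P,Q,R)<\Delta'(P,Q),\\ 1 & \text{if } \delta(P,Q,R)=\Delta'(P,Q),\\ 2 & \text{if } \delta(P,Q,R)>\Delta'(P,Q).\end{cases}$$
   Context: $D=\{(x,y)\in\mathbb{R}^2: x^2+y^2<1\}$ (Beltrami–Klein disk), $S^1$ its boundary circle. Let $D_P$ be the unit disk with Poincaré distance $d(P,Q)=\operatorname{arccosh}\left(1+\frac{2|P-Q|^2}{(1-|P|^2)(1-|Q|^2)}\right)$, and $G:D_P\to D$, $G(x,y)=\left(\frac{2x}{1+x^2+y^2},\frac{2y}{1+x^2+y^2}\right)$, with inverse $G^{-1}(x,y)=\left(\frac{x}{1+\sqrt{1-x^2-y^2}},\frac{y}{1+\sqrt{1-x^2-y^2}}\right)$. For $P,Q\in D$, $d'(P,Q):=d(G^{-1}(P),G^{-1}(Q))$; equivalently, if $v_1,v_2\in S^1$ are the endpoints of the chord through $P,Q$, $d'(P,Q)=\frac12\left|\log\frac{|v_1Q||v_2P|}{|v_1P||v_2Q|}\right|$. For $P\ne Q$, $\Delta'(P,Q):=\log\frac{e^{d'(P,Q)}+1}{e^{d'(P,Q)}-1}$. $\delta(P,Q,R)$ is the minimum of $d'(R,S)$ over points $S\in D$ on the straight line through $P$ and $Q$. A triangle inscribed in $S^1$ and circumscribing $\triangle PQR$ is a Euclidean triangle with three distinct vertices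 on $S^1$ such that $P$, $Q$, $R$ lie on three distinct sides of it (one point on each side). *)

theory Defs
  imports "HOL-Analysis.Analysis"
begin

definition klein_disk :: "complex set" where
  "klein_disk = {z. cmod z < 1}"

definition circle_S1 :: "complex set" where
  "circle_S1 = {z. cmod z = 1}"

definition poincare_dist :: "complex \<Rightarrow> complex \<Rightarrow> real" where
  "poincare_dist P Q = arcosh (1 + 2 * (cmod (P - Q))\<^sup>2 / ((1 - (cmod P)\<^sup>2) * (1 - (cmod Q)\<^sup>2)))"

text \<open>Inverse of G : D_P \<rightarrow> D.\<close>
definition G_inv :: "complex \<Rightarrow> complex" where
  "G_inv z = z / complex_of_real (1 + sqrt (1 - (cmod z)\<^sup>2))"

definition klein_dist :: "complex \<Rightarrow> complex \<Rightarrow> real" where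
  "klein_dist P Q = poincare_dist (G_inv P) (G_inv Q)"

definition Delta' :: "complex \<Rightarrow> complex \<Rightarrow> real" where
  "Delta' P Q = ln ((exp (klein_dist P Q) + 1) / (exp (klein_dist P Q) - 1))"

definition delta_dist :: "complex \<Rightarrow> complex \<Rightarrow> complex \<Rightarrow> real" where
  "delta_dist P Q R = Inf {klein_dist R S | S. S \<in> klein_disk \<and> (\<exists>t::real. S = P + t *\<^sub>R (Q - P))}"

definition circumscribing_inscribed_triangles :: "complex \<Rightarrow> complex \<Rightarrow> complex \<Rightarrow> complex set set" where
  "circumscribing_inscribed_triangles P Q R =
    {T. \<exists>a b c. T = {a, b, c} \<and> a \<noteq> b \<and> b \<noteq> c \<and> a \<noteq> c \<and>
        a \<in> circle_S1 \<and> b \<in> circle_S1 \<and> c \<in> circle_S1 \<and>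
        P \<in> closed_segment a b \<and> Q \<in> closed_segment b c \<and> R \<in> closed_segment c a}"

end

theory Submission
  imports Defs
begin

lemma cmod_sq: "(cmod z)^2 = (Re z)^2 + (Im z)^2"
  by (simp add: cmod_power2)

lemma aux_klein:
  fixes a b c d s r :: real
  assumes sp: "s > 0" and rp: "r > 0" and s2: "s^2 = 1 - a^2 - b^2" and r2: "r^2 = 1 - c^2 - d^2"
  shows "1 + 2 * ((a/(1+s) - c/(1+r))^2 + (b/(1+s) - d/(1+r))^2) /
     ((1 - ((a/(1+s))^2 + (b/(1+s))^2)) * (1 - ((c/(1+r))^2 + (d/(1+r))^2)))
     = (1 - (a*c + b*d)) / (s * r)"
proof -
  have n1: "1 + s \<noteq> 0" "1 + r \<noteq> 0" using sp rp by auto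
  have h1: "1 - ((a/(1+s))^2 + (b/(1+s))^2) = 2 * s / (1 + s)"
  proof -
    have "(a/(1+s))^2 + (b/(1+s))^2 = (a^2+b^2)/(1+s)^2" by (simp add: power_divide add_divide_distrib)
    also have "\<dots> = (1 - s) / (1 + s)"
    proof -
      have "a^2+b^2 = (1-s)*(1+s)" using s2 by (simp add: algebra_simps power2_eq_square)
      then show ?thesis using n1 by (simp add: power2_eq_square)
    qed
    finally show ?thesis using n1 by (simp add: field_simps)
  qed
  have h2: "1 - ((c/(1+r))^2 + (d/(1+r))^2) = 2 * r / (1 + r)"
  proof -
    have "(c/(1+r))^2 + (d/(1+r))^2 = (c^2+d^2)/(1+r)^2" by (simp add: power_divide add_divide_distrib)
    also have "\<dots> = (1 - r) / (1 + r)"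
    proof -
      have "c^2+d^2 = (1-r)*(1+r)" using r2 by (simp add: algebra_simps power2_eq_square)
      then show ?thesis using n1 by (simp add: power2_eq_square)
    qed
    finally show ?thesis using n1 by (simp add: field_simps)
  qed
  have h3: "(a/(1+s) - c/(1+r))^2 + (b/(1+s) - d/(1+r))^2
       = ((a^2+b^2)*(1+r)^2 + (c^2+d^2)*(1+s)^2 - 2*(a*c+b*d)*(1+s)*(1+r)) / ((1+s)^2*(1+r)^2)"
  proof -
    have x: "a/(1+s) - c/(1+r) = (a*(1+r) - c*(1+s))/((1+s)*(1+r))" using n1 by (simp add: field_simps)
    have y: "b/(1+s) - d/(1+r) = (b*(1+r) - d*(1+s))/((1+s)*(1+r))" using n1 by (simp add: field_simps)
    show ?thesis unfolding x y power_divide add_divide_distrib[symmetric]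
      by (simp add: power_mult_distrib algebra_simps power2_eq_square)
  qed
  have h4: "((a^2+b^2)*(1+r)^2 + (c^2+d^2)*(1+s)^2 - 2*(a*c+b*d)*(1+s)*(1+r)) =
     (1+s)*(1+r)*((1-s)*(1+r) + (1-r)*(1+s) - 2*(a*c+b*d))"
  proof -
    have ab: "a^2+b^2 = 1 - s^2" "c^2+d^2 = 1 - r^2" using s2 r2 by auto
    show ?thesis unfolding ab by (simp add: algebra_simps power2_eq_square)
  qed
  define M where "M = (1-s)*(1+r) + (1-r)*(1+s) - 2*(a*c+b*d)"
  have "2 * ((1+s)*(1+r)*M / ((1+s)^2*(1+r)^2)) / ((2 * s / (1 + s)) * (2 * r / (1 + r))) = M / (2 * s * r)"
  proof -
    have g: "\<And>u v M :: real. u \<noteq> 0 \<Longrightarrow> v \<noteq> 0 \<Longrightarrow> s \<noteq> 0 \<Longrightarrow> r \<noteq> 0 \<Longrightarrow>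
       2 * (u * v * M / (u^2 * v^2)) / ((2 * s / u) * (2 * r / v)) = M / (2 * s * r)"
      by (simp add: field_simps power2_eq_square)
    show ?thesis using g[of "1+s" "1+r" M] sp rp n1 by simp
  qed
  then have "1 + 2 * ((1+s)*(1+r)*M / ((1+s)^2*(1+r)^2)) / ((2 * s / (1 + s)) * (2 * r / (1 + r))) = (1 - (a*c + b*d)) / (s * r)"
    using sp rp unfolding M_def by (simp add: field_simps)
  then show ?thesis unfolding h1 h2 h3 h4 M_def .
qed

lemma perfect_sq:
  fixes K M g0 g1 h0 h1 L t :: real
  assumes "K = h1^2 + L * h0" "M = L * g0^2 + 2 * g0 * g1 * h1 - g1^2 * h0"
  shows "4 * (K * g1^2 + M * L) * (K * (g0 - t * g1)^2 - M * (h0 - 2 * t * h1 - t^2 * L))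
        = (2 * (K * g1^2 + M * L) * t + 2 * (M * h1 - K * g0 * g1))^2"
  using assms by algebra

lemma ident_M:
  fixes p1 p2 q1 q2 r1 r2 :: real
  shows "(1 - r1^2 - r2^2) * ((1 - (p1 * q1 + p2 * q2))^2 - (1 - p1^2 - p2^2) * (1 - q1^2 - q2^2))
     + ((q2 * p1 - q1 * p2) + (r2 * q1 - r1 * q2) - (r2 * p1 - r1 * p2))^2
   = ((q1-p1)^2 + (q2-p2)^2) * (1 - (r1 * p1 + r2 * p2))^2
     + 2 * (1 - (r1 * p1 + r2 * p2)) * (r1 * (q1-p1) + r2 * (q2-p2)) * (p1 * (q1-p1) + p2 * (q2-p2))
     - (r1 * (q1-p1) + r2 * (q2-p2))^2 * (1 - p1^2 - p2^2)"
  by (simp add: algebra_simps power2_eq_square)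

lemma ident_K:
  fixes p1 p2 q1 q2 :: real
  shows "(1 - (p1 * q1 + p2 * q2))^2 - (1 - p1^2 - p2^2) * (1 - q1^2 - q2^2)
    = (p1 * (q1-p1) + p2 * (q2-p2))^2 + ((q1-p1)^2 + (q2-p2)^2) * (1 - p1^2 - p2^2)"
  by (simp add: algebra_simps power2_eq_square)

lemma line_min_real:
  fixes p1 p2 q1 q2 r1 r2 :: real
  assumes hp: "p1^2+p2^2 < 1" and hq: "q1^2+q2^2 < 1" and hr: "r1^2+r2^2 < 1" and ne: "(p1,p2) \<noteq> (q1,q2)"
  defines "K \<equiv> (1 - (p1 * q1 + p2 * q2))^2 - (1 - p1^2 - p2^2) * (1 - q1^2 - q2^2)"
    and "A \<equiv> (q2 * p1 - q1 * p2) + (r2 * q1 - r1 * q2) - (r2 * p1 - r1 * p2)"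
  defines "M \<equiv> (1 - r1^2 - r2^2) * K + A^2"
    and "g \<equiv> \<lambda>t. 1 - (r1 * (p1 + t * (q1-p1)) + r2 * (p2 + t * (q2-p2)))"
    and "h \<equiv> \<lambda>t. 1 - (p1 + t * (q1-p1))^2 - (p2 + t * (q2-p2))^2"
  shows "K > 0" "M > 0" "\<And>t. K * (g t)^2 \<ge> M * h t" "\<And>t. h t \<ge> 0 \<Longrightarrow> g t > 0"
    "\<exists>t. h t > 0 \<and> K * (g t)^2 = M * h t"
proof -
  define g0 where "g0 = 1 - (r1 * p1 + r2 * p2)"
  define g1 where "g1 = r1 * (q1-p1) + r2 * (q2-p2)"
  define h0 where "h0 = 1 - p1^2 - p2^2"
  define h1 where "h1 = p1 * (q1-p1) + p2 * (q2-p2)"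
  define L where "L = (q1-p1)^2 + (q2-p2)^2"
  have gt: "\<And>t. g t = g0 - t * g1" unfolding g_def g0_def g1_def by (simp add: algebra_simps)
  have ht: "\<And>t. h t = h0 - 2 * t * h1 - t^2 * L" unfolding h_def h0_def h1_def L_def
    by (simp add: algebra_simps power2_eq_square)
  have IK: "K = h1^2 + L * h0" unfolding K_def h1_def L_def h0_def using ident_K by simp
  have IM: "M = L * g0^2 + 2 * g0 * g1 * h1 - g1^2 * h0"
    unfolding M_def K_def A_def L_def g0_def g1_def h1_def h0_def using ident_M by simp
  have L0: "L > 0"
  proof -
    have "q1 - p1 \<noteq> 0 \<or> q2 - p2 \<noteq> 0" using ne by auto
    then show ?thesis unfolding L_def by (auto simp: add_pos_nonneg add_nonneg_pos)
  qed
  have h00: "h0 > 0" unfolding h0_def using hp by simp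
  show K0: "K > 0" unfolding IK using L0 h00
    by (simp add: add_nonneg_pos)
  have rho: "1 - r1^2 - r2^2 > 0" using hr by simp
  show M0: "M > 0" unfolding M_def using K0 rho by (simp add: add_pos_nonneg)
  define a where "a = K * g1^2 + M * L"
  have a0: "a > 0" unfolding a_def using K0 M0 L0 by (simp add: add_nonneg_pos)
  have PS: "\<And>t. 4 * a * (K * (g t)^2 - M * h t) = (2 * a * t + 2 * (M * h1 - K * g0 * g1))^2"
    unfolding gt ht a_def using perfect_sq[OF IK IM] by simp
  show Phi: "\<And>t. K * (g t)^2 \<ge> M * h t"
  proof -
    fix t
    have "4 * a * (K * (g t)^2 - M * h t) \<ge> 0" unfolding PS by simp
    then have "K * (g t)^2 - M * h t \<ge> 0" using a0 by (simp add: zero_le_mult_iff)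
    then show "K * (g t)^2 \<ge> M * h t" by simp
  qed
  show gpos: "\<And>t. h t \<ge> 0 \<Longrightarrow> g t > 0"
  proof -
    fix t assume "h t \<ge> 0"
    define s1 where "s1 = p1 + t * (q1-p1)"
    define s2 where "s2 = p2 + t * (q2-p2)"
    have s: "s1^2 + s2^2 \<le> 1" using \<open>h t \<ge> 0\<close> unfolding h_def s1_def s2_def by simp
    have "2 * (r1 * s1 + r2 * s2) \<le> (r1^2 + s1^2) + (r2^2 + s2^2)"
      using sum_squares_ge_zero[of "r1 - s1" "r2 - s2"] by (simp add: algebra_simps power2_eq_square)
    then have "r1 * s1 + r2 * s2 < 1" using s hr by (smt (verit))
    then show "g t > 0" unfolding g_def s1_def s2_def by simp
  qed
  define t0 where "t0 = - (M * h1 - K * g0 * g1) / a"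
  have "2 * a * t0 + 2 * (M * h1 - K * g0 * g1) = 0" unfolding t0_def using a0 by simp
  then have "4 * a * (K * (g t0)^2 - M * h t0) = 0" using PS[of t0] by simp
  then have E: "K * (g t0)^2 = M * h t0" using a0 by simp
  have "M * h t0 \<ge> 0" unfolding E[symmetric] using K0 by simp
  then have "h t0 \<ge> 0" using M0 by (simp add: zero_le_mult_iff)
  then have "g t0 > 0" by (rule gpos)
  then have "M * h t0 > 0" unfolding E[symmetric] using K0 by simp
  then have "h t0 > 0" using M0 by (simp add: zero_less_mult_iff)
  then show "\<exists>t. h t > 0 \<and> K * (g t)^2 = M * h t" using E by blast
qed

definition kc :: "complex \<Rightarrow> complex \<Rightarrow> real" where
  "kc P Q = (1 - (Re P * Re Q + Im P * Im Q)) / (sqrt (1 - (cmod P)^2) * sqrt (1 - (cmod Q)^2))"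

lemma disk_sq: "cmod z < 1 \<Longrightarrow> (Re z)^2 + (Im z)^2 < 1"
proof -
  assume "cmod z < 1"
  then have "(cmod z)^2 < 1" by (simp add: power_less_one_iff abs_less_iff)
  then show ?thesis by (simp add: cmod_sq)
qed

lemma klein_dist_eq:
  assumes "cmod P < 1" "cmod Q < 1"
  shows "klein_dist P Q = arcosh (kc P Q)"
proof -
  define s where "s = sqrt (1 - (cmod P)^2)"
  define r where "r = sqrt (1 - (cmod Q)^2)"
  have p1: "(Re P)^2 + (Im P)^2 < 1" "(Re Q)^2 + (Im Q)^2 < 1" using assms disk_sq by auto
  have s2: "s^2 = 1 - (Re P)^2 - (Im P)^2" using p1 unfolding s_def by (simp add: cmod_sq)
  have r2: "r^2 = 1 - (Re Q)^2 - (Im Q)^2" using p1 unfolding r_def by (simp add: cmod_sq)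
  have sp: "s > 0" using p1 unfolding s_def by (simp add: cmod_sq)
  have rp: "r > 0" using p1 unfolding r_def by (simp add: cmod_sq)
  have GP: "G_inv P = P / complex_of_real (1 + s)" unfolding G_inv_def s_def by simp
  have GQ: "G_inv Q = Q / complex_of_real (1 + r)" unfolding G_inv_def r_def by simp
  have e1: "Re (G_inv P) = Re P / (1+s)" "Im (G_inv P) = Im P / (1+s)"
    unfolding GP by simp_all
  have e2: "Re (G_inv Q) = Re Q / (1+r)" "Im (G_inv Q) = Im Q / (1+r)"
    unfolding GQ by simp_all
  have "1 + 2 * (cmod (G_inv P - G_inv Q))\<^sup>2 / ((1 - (cmod (G_inv P))\<^sup>2) * (1 - (cmod (G_inv Q))\<^sup>2))
     = (1 - (Re P * Re Q + Im P * Im Q)) / (s * r)"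
    unfolding cmod_sq using aux_klein[OF sp rp s2 r2] by (simp add: e1 e2)
  then show ?thesis unfolding klein_dist_def poincare_dist_def kc_def s_def r_def by simp
qed

lemma kc_ge1:
  assumes "cmod P < 1" "cmod Q < 1"
  shows "kc P Q \<ge> 1"
proof -
  define a where "a = 1 - (Re P)^2 - (Im P)^2"
  define b where "b = 1 - (Re Q)^2 - (Im Q)^2"
  define g where "g = 1 - (Re P * Re Q + Im P * Im Q)"
  have a0: "a > 0" "b > 0" using assms disk_sq unfolding a_def b_def by (auto simp: algebra_simps)
  have "g^2 - a * b = (Re P - Re Q)^2 + (Im P - Im Q)^2 - (Re P * Im Q - Im P * Re Q)^2"
    unfolding a_def b_def g_def by (simp add: algebra_simps power2_eq_square)
  have "g^2 - a * b \<ge> 0"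
  proof -
    have "g^2 - a*b = (Re P * Re Q + Im P * Im Q - 1)^2 - a*b" unfolding g_def by (simp add: power2_eq_square algebra_simps)
    have "a * b \<le> ((a + b)/2)^2" using sum_squares_ge_zero[of "a - b" 0]
      by (simp add: power2_eq_square field_simps)
    moreover have "(a+b)/2 \<le> g"
    proof -
      have "2*g - (a+b) = (Re P - Re Q)^2 + (Im P - Im Q)^2"
        unfolding a_def b_def g_def by (simp add: power2_eq_square algebra_simps)
      moreover have "(Re P - Re Q)^2 \<ge> 0" "(Im P - Im Q)^2 \<ge> 0" by simp_all
      ultimately have "a + b \<le> 2 * g" by linarith
      then show ?thesis by simp
    qed
    moreover have "(a+b)/2 \<ge> 0" using a0 by simp
    ultimately have "a * b \<le> g^2" by (meson order_trans power_mono)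
    then show ?thesis by simp
  qed
  have gpos: "g > 0"
  proof -
    have "(a+b)/2 \<le> g"
    proof -
      have "2*g - (a+b) = (Re P - Re Q)^2 + (Im P - Im Q)^2"
        unfolding a_def b_def g_def by (simp add: power2_eq_square algebra_simps)
      moreover have "(Re P - Re Q)^2 \<ge> 0" "(Im P - Im Q)^2 \<ge> 0" by simp_all
      ultimately have "a + b \<le> 2 * g" by linarith
      then show ?thesis by simp
    qed
    then show ?thesis using a0 by simp
  qed
  have "kc P Q = g / (sqrt a * sqrt b)" unfolding kc_def g_def a_def b_def cmod_sq
    by (simp add: diff_diff_eq)
  then have "kc P Q = g / sqrt (a * b)" by (simp add: real_sqrt_mult)
  moreover have "sqrt (a * b) \<le> g" using \<open>g^2 - a * b \<ge> 0\<close> gpos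
    by (metis diff_ge_0_iff_ge real_le_lsqrt real_sqrt_le_mono real_sqrt_unique less_le)
  moreover have "sqrt (a * b) > 0" using a0 by simp
  ultimately show ?thesis by simp
qed

lemma arcosh_le_mono: "1 \<le> x \<Longrightarrow> x \<le> y \<Longrightarrow> arcosh x \<le> arcosh (y::real)"
  by (cases "x = y") (auto intro: less_imp_le arcosh_real_strict_mono)

lemma delta_eq:
  assumes hP: "cmod P < 1" and hQ: "cmod Q < 1" and hR: "cmod R < 1" and ne: "P \<noteq> Q"
  defines "K \<equiv> (1 - (Re P * Re Q + Im P * Im Q))^2 - (1 - (Re P)^2 - (Im P)^2) * (1 - (Re Q)^2 - (Im Q)^2)"
    and "A \<equiv> Im (Q * cnj P) + Im (R * cnj Q) - Im (R * cnj P)"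
  defines "M \<equiv> (1 - (Re R)^2 - (Im R)^2) * K + A^2"
  shows "K > 0" "delta_dist P Q R = arcosh (sqrt (M / ((1 - (Re R)^2 - (Im R)^2) * K)))"
proof -
  define p1 where "p1 = Re P" define p2 where "p2 = Im P"
  define q1 where "q1 = Re Q" define q2 where "q2 = Im Q"
  define r1 where "r1 = Re R" define r2 where "r2 = Im R"
  define g where "g \<equiv> \<lambda>t. 1 - (r1 * (p1 + t * (q1-p1)) + r2 * (p2 + t * (q2-p2)))"
  define h where "h \<equiv> \<lambda>t. 1 - (p1 + t * (q1-p1))^2 - (p2 + t * (q2-p2))^2"
  have d: "p1^2+p2^2 < 1" "q1^2+q2^2 < 1" "r1^2+r2^2 < 1"
    using disk_sq hP hQ hR unfolding p1_def p2_def q1_def q2_def r1_def r2_def by auto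
  have ne': "(p1,p2) \<noteq> (q1,q2)" using ne unfolding p1_def p2_def q1_def q2_def by (auto simp: complex_eq_iff)
  have KK: "K = (1 - (p1 * q1 + p2 * q2))^2 - (1 - p1^2 - p2^2) * (1 - q1^2 - q2^2)"
    unfolding K_def p1_def p2_def q1_def q2_def by simp
  have AA: "A = (q2 * p1 - q1 * p2) + (r2 * q1 - r1 * q2) - (r2 * p1 - r1 * p2)"
    unfolding A_def p1_def p2_def q1_def q2_def r1_def r2_def by (simp add: algebra_simps)
  have MM: "M = (1 - r1^2 - r2^2) * K + A^2" unfolding M_def r1_def r2_def by simp
  note LM = line_min_real[OF d ne', folded KK AA, folded MM, folded g_def h_def]
  show K0: "K > 0" by (rule LM(1))
  have M0: "M > 0" by (rule LM(2))
  define rho where "rho = 1 - r1^2 - r2^2"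
  have rho0: "rho > 0" using d unfolding rho_def by simp
  define C0 where "C0 = sqrt (M / (rho * K))"
  have C01: "C0 \<ge> 1"
  proof -
    have "rho * K \<le> M" unfolding MM rho_def by simp
    then have "1 \<le> M / (rho * K)" using rho0 K0 by simp
    then show ?thesis unfolding C0_def by simp
  qed
  have kcS: "kc R (P + t *\<^sub>R (Q - P)) = g t / (sqrt rho * sqrt (h t))" for t
    unfolding kc_def g_def h_def rho_def p1_def p2_def q1_def q2_def r1_def r2_def cmod_sq
    by (simp add: diff_diff_eq algebra_simps)
  have hS: "h t = 1 - (cmod (P + t *\<^sub>R (Q - P)))^2" for t
    unfolding h_def p1_def p2_def q1_def q2_def cmod_sq by (simp add: diff_diff_eq algebra_simps)
  have kc_sq: "(kc R (P + t *\<^sub>R (Q - P)))^2 = (g t)^2 / (rho * h t)" if "h t > 0" for t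
    unfolding kcS using that rho0 by (simp add: power_divide power_mult_distrib)
  have kc_nn: "kc R (P + t *\<^sub>R (Q - P)) \<ge> 0" if "h t > 0" for t
  proof -
    have "g t > 0" using LM(4)[of t] that unfolding g_def h_def by simp
    then show ?thesis unfolding kcS using that rho0 by simp
  qed
  have lower: "C0 \<le> kc R (P + t *\<^sub>R (Q - P))" if "h t > 0" for t
  proof -
    have "M * h t \<le> K * (g t)^2" using LM(3)[of t] unfolding g_def h_def by simp
    then have "M / (rho * K) \<le> (g t)^2 / (rho * h t)"
      using that rho0 K0 by (simp add: field_simps)
    then have "M / (rho * K) \<le> (kc R (P + t *\<^sub>R (Q - P)))^2" using kc_sq that by simp
    then show ?thesis unfolding C0_def using kc_nn[OF that] real_le_lsqrt real_sqrt_le_mono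
      by (metis real_sqrt_abs abs_of_nonneg)
  qed
  obtain t0 where t0: "h t0 > 0" "K * (g t0)^2 = M * h t0" using LM(5) unfolding g_def h_def by auto
  have at: "kc R (P + t0 *\<^sub>R (Q - P)) = C0"
  proof -
    have "(g t0)^2 / (rho * h t0) = M / (rho * K)"
      using t0 rho0 K0 by (simp add: field_simps)
    then have "(kc R (P + t0 *\<^sub>R (Q - P)))^2 = M / (rho * K)" using kc_sq t0 by simp
    then show ?thesis unfolding C0_def using kc_nn[OF t0(1)] by (metis real_sqrt_unique)
  qed
  let ?X = "{klein_dist R S | S. S \<in> klein_disk \<and> (\<exists>t::real. S = P + t *\<^sub>R (Q - P))}"
  have "Inf ?X = arcosh C0"
  proof (rule cInf_eq_minimum)
    have "cmod (P + t0 *\<^sub>R (Q - P)) < 1"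
    proof -
      have "(cmod (P + t0 *\<^sub>R (Q - P)))^2 < 1" using t0(1) hS[of t0] by simp
      then show ?thesis by (simp add: power_less_one_iff abs_less_iff)
    qed
    then show "arcosh C0 \<in> ?X"
      using at klein_dist_eq[OF hR, of "P + t0 *\<^sub>R (Q - P)"] unfolding klein_disk_def by force
  next
    fix x assume "x \<in> ?X"
    then obtain t where S: "cmod (P + t *\<^sub>R (Q - P)) < 1" "x = klein_dist R (P + t *\<^sub>R (Q - P))"
      unfolding klein_disk_def by auto
    have "(cmod (P + t *\<^sub>R (Q - P)))^2 < 1" using S(1)
      by (simp add: power_less_one_iff abs_less_iff)
    then have "h t > 0" using hS[of t] by simp
    then have "C0 \<le> kc R (P + t *\<^sub>R (Q - P))" by (rule lower)
    then show "arcosh C0 \<le> x" unfolding S(2) klein_dist_eq[OF hR S(1)]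
      using arcosh_le_mono C01 by blast
  qed
  then show "delta_dist P Q R = arcosh (sqrt (M / ((1 - (Re R)^2 - (Im R)^2) * K)))"
    unfolding delta_dist_def C0_def rho_def r1_def r2_def by simp
qed

lemma cosh_Delta:
  fixes c :: real
  assumes c1: "c > 1"
  defines "y \<equiv> (exp (arcosh c) + 1) / (exp (arcosh c) - 1)"
  shows "ln y \<ge> 0" "cosh (ln y) = c / sqrt (c^2 - 1)"
proof -
  define w where "w = sqrt (c^2 - 1)"
  have w2: "w^2 = c^2 - 1" unfolding w_def using c1 by simp
  have w0: "w > 0" unfolding w_def using c1 by (simp add: power_strict_mono[of 1 c 2, simplified])
  have e: "exp (arcosh c) = c + w" unfolding w_def using c1
    by (simp add: arcosh_real_def add_pos_nonneg)
  have e1: "c + w - 1 > 0" using c1 w0 by simp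
  have ydef: "y = (c + w + 1) / (c + w - 1)" unfolding y_def e by simp
  have y1: "y \<ge> 1" unfolding ydef using e1 by simp
  show "ln y \<ge> 0" using y1 by simp
  have ypos: "y > 0" using y1 by simp
  have "cosh (ln y) = (y + inverse y) / 2" using ypos by (simp add: cosh_ln_real)
  also have "\<dots> = ((c + w + 1)^2 + (c + w - 1)^2) / (2 * ((c + w + 1) * (c + w - 1)))"
  proof -
    have "c + w + 1 > 0" using c1 w0 by simp
    then show ?thesis unfolding ydef using e1 by (simp add: field_simps power2_eq_square)
  qed
  also have "\<dots> = c / w"
  proof -
    have n1: "(c + w + 1)^2 + (c + w - 1)^2 = 4 * c * (c + w)" using w2 by (simp add: algebra_simps power2_eq_square)
    have n2: "2 * ((c + w + 1) * (c + w - 1)) = 4 * w * (c + w)" using w2 by (simp add: algebra_simps power2_eq_square)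
    have "c + w > 0" using c1 w0 by simp
    then have "4 * w * (c + w) \<noteq> 0" using w0 by simp
    then show ?thesis unfolding n1 n2 using w0 by (simp add: frac_eq_eq)
  qed
  finally show "cosh (ln y) = c / sqrt (c^2 - 1)" unfolding w_def .
qed

lemma final_cmp:
  fixes rho a b g K A :: real
  assumes rho: "rho > 0" and a: "a > 0" and b: "b > 0" and g: "g > 0" and K: "K = g^2 - a * b" "K > 0"
  defines "c \<equiv> g / (sqrt a * sqrt b)"
  shows "(sqrt ((rho * K + A^2) / (rho * K)) < c / sqrt (c^2 - 1) \<longleftrightarrow> A^2 < rho * a * b)
       \<and> (sqrt ((rho * K + A^2) / (rho * K)) = c / sqrt (c^2 - 1) \<longleftrightarrow> A^2 = rho * a * b)"
proof -
  have c2: "c^2 = g^2 / (a * b)" unfolding c_def using a b by (simp add: power_divide power_mult_distrib)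
  have c21: "c^2 - 1 = K / (a * b)" unfolding c2 K(1) using a b by (simp add: field_simps)
  have cpos: "c > 0" unfolding c_def using a b g by simp
  have q: "c / sqrt (c^2 - 1) = sqrt (g^2 / K)"
  proof -
    have "c = sqrt (c^2)" using cpos by simp
    then have "c / sqrt (c^2 - 1) = sqrt (c^2 / (c^2 - 1))" by (metis real_sqrt_divide)
    also have "c^2 / (c^2 - 1) = g^2 / K" unfolding c2 c21 using a b K by (simp add: field_simps)
    finally show ?thesis .
  qed
  have l: "(rho * K + A^2) / (rho * K) < g^2 / K \<longleftrightarrow> A^2 < rho * a * b"
  proof -
    have "(rho * K + A^2) / (rho * K) < g^2 / K \<longleftrightarrow> rho * K + A^2 < rho * g^2"
      using rho K(2) apply (simp add: field_simps)
      by (metis distrib_left mult_less_cancel_left_pos)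
    also have "\<dots> \<longleftrightarrow> A^2 < rho * a * b" unfolding K(1) by (simp add: algebra_simps)
    finally show ?thesis .
  qed
  have e: "(rho * K + A^2) / (rho * K) = g^2 / K \<longleftrightarrow> A^2 = rho * a * b"
  proof -
    have "(rho * K + A^2) / (rho * K) = g^2 / K \<longleftrightarrow> rho * K + A^2 = rho * g^2"
      using rho K(2) apply (simp add: field_simps)
      by (metis distrib_left mult_cancel_left less_irrefl)
    also have "\<dots> \<longleftrightarrow> A^2 = rho * a * b" unfolding K(1) by (simp add: algebra_simps)
    finally show ?thesis .
  qed
  show ?thesis unfolding q using l e by simp
qed

lemma cosh_nonneg_eq_iff: "(x::real) \<ge> 0 \<Longrightarrow> y \<ge> 0 \<Longrightarrow> cosh x = cosh y \<longleftrightarrow> x = y"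
  using cosh_real_nonneg_le_iff[of x y] cosh_real_nonneg_le_iff[of y x] by (auto simp: order_antisym_conv)

lemma delta_vs_Delta:
  assumes hP: "cmod P < 1" and hQ: "cmod Q < 1" and hR: "cmod R < 1" and ne: "P \<noteq> Q"
  defines "A \<equiv> Im (Q * cnj P) + Im (R * cnj Q) - Im (R * cnj P)"
    and "D \<equiv> (1 - (Re P)^2 - (Im P)^2) * (1 - (Re Q)^2 - (Im Q)^2) * (1 - (Re R)^2 - (Im R)^2)"
  shows "(delta_dist P Q R < Delta' P Q \<longleftrightarrow> A^2 < D) \<and> (delta_dist P Q R = Delta' P Q \<longleftrightarrow> A^2 = D)"
proof -
  define a where "a = 1 - (Re P)^2 - (Im P)^2"
  define b where "b = 1 - (Re Q)^2 - (Im Q)^2"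
  define rho where "rho = 1 - (Re R)^2 - (Im R)^2"
  define g where "g = 1 - (Re P * Re Q + Im P * Im Q)"
  define K where "K = g^2 - a * b"
  have a0: "a > 0" "b > 0" "rho > 0" using hP hQ hR disk_sq unfolding a_def b_def rho_def by (auto simp: algebra_simps)
  have DE: "delta_dist P Q R = arcosh (sqrt ((rho * K + A^2) / (rho * K)))"
    and K0: "K > 0"
    using delta_eq[OF hP hQ hR ne] unfolding K_def g_def a_def b_def rho_def A_def by (simp_all add: algebra_simps)
  define c where "c = kc P Q"
  have cdef: "c = g / (sqrt a * sqrt b)" unfolding c_def kc_def g_def a_def b_def cmod_sq by (simp add: diff_diff_eq)
  have c1: "c \<ge> 1" unfolding c_def by (rule kc_ge1[OF hP hQ])
  have gpos: "g > 0"
  proof -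
    have "g = c * (sqrt a * sqrt b)" unfolding cdef using a0 by simp
    then show ?thesis using c1 a0 by simp
  qed
  have cgt: "c > 1"
  proof -
    have "c^2 = g^2 / (a * b)" unfolding cdef using a0 by (simp add: power_divide power_mult_distrib)
    also have "\<dots> > 1" using K0 a0 unfolding K_def by simp
    finally have "c^2 > 1" .
    then show ?thesis using c1 by (smt (verit) one_power2 power_mono)
  qed
  have Dl: "Delta' P Q = ln ((exp (arcosh c) + 1) / (exp (arcosh c) - 1))"
    unfolding Delta'_def c_def klein_dist_eq[OF hP hQ] ..
  note CD = cosh_Delta[OF cgt, folded Dl]
  define C0 where "C0 = sqrt ((rho * K + A^2) / (rho * K))"
  have C01: "C0 \<ge> 1"
  proof -
    have "rho * K \<le> rho * K + A^2" by simp
    then have "1 \<le> (rho * K + A^2) / (rho * K)" using a0 K0 by simp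
    then show ?thesis unfolding C0_def by simp
  qed
  have coshd: "cosh (delta_dist P Q R) = C0" unfolding DE C0_def[symmetric] using C01 by simp
  have dnn: "delta_dist P Q R \<ge> 0" unfolding DE C0_def[symmetric] using C01 by simp
  note FC = final_cmp[OF a0(3) a0(1) a0(2) gpos K_def K0, of A, folded cdef C0_def]
  have "delta_dist P Q R < Delta' P Q \<longleftrightarrow> cosh (delta_dist P Q R) < cosh (Delta' P Q)"
    using cosh_real_nonneg_less_iff[OF dnn CD(1)] by simp
  also have "\<dots> \<longleftrightarrow> A^2 < rho * a * b" unfolding coshd CD(2) using FC by simp
  finally have 1: "delta_dist P Q R < Delta' P Q \<longleftrightarrow> A^2 < D" unfolding D_def rho_def a_def b_def by (simp add: mult.commute mult.left_commute)
  have "delta_dist P Q R = Delta' P Q \<longleftrightarrow> cosh (delta_dist P Q R) = cosh (Delta' P Q)"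
    using cosh_nonneg_eq_iff[OF dnn CD(1)] by simp
  also have "\<dots> \<longleftrightarrow> A^2 = rho * a * b" unfolding coshd CD(2) using FC by simp
  finally have 2: "delta_dist P Q R = Delta' P Q \<longleftrightarrow> A^2 = D" unfolding D_def rho_def a_def b_def by (simp add: mult.commute mult.left_commute)
  show ?thesis using 1 2 by simp
qed

definition fm :: "complex \<Rightarrow> complex \<Rightarrow> complex" where
  "fm X z = (X - z) / (1 - cnj X * z)"

lemma circ_cnj: "cmod z = 1 \<Longrightarrow> z * cnj z = 1"
  by (simp add: complex_mult_cnj cmod_def power2_eq_square)

lemma den_nz:
  assumes "cmod z = 1" "cmod X < 1"
  shows "1 - cnj X * z \<noteq> 0"
proof
  assume "1 - cnj X * z = 0"
  then have "cnj X * z = 1" by simp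
  then have "cmod (cnj X * z) = 1" by simp
  then show False using assms by (simp add: norm_mult)
qed

lemma fm_circle:
  assumes z: "cmod z = 1" and X: "cmod X < 1"
  shows "cmod (fm X z) = 1"
proof -
  have e: "1 - cnj X * z = z * cnj (z - X)" using circ_cnj[OF z] by (simp add: algebra_simps)
  have "cmod (1 - cnj X * z) = cmod (X - z)" unfolding e using z by (simp add: norm_mult) (metis complex_cnj_diff complex_mod_cnj norm_minus_commute)
  moreover have "X \<noteq> z" using z X by auto
  ultimately show ?thesis unfolding fm_def using den_nz[OF z X] by (simp add: norm_divide)
qed

lemma fm_eq_iff:
  assumes z: "cmod z = 1" and X: "cmod X < 1"
  shows "fm X z = w \<longleftrightarrow> w * (1 - cnj X * z) = X - z"
  unfolding fm_def using den_nz[OF z X] by (auto simp: field_simps)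

lemma fm_invol:
  assumes z: "cmod z = 1" and X: "cmod X < 1"
  shows "fm X (fm X z) = z"
proof -
  define w where "w = fm X z"
  have w1: "cmod w = 1" unfolding w_def using fm_circle[OF z X] .
  have e: "w * (1 - cnj X * z) = X - z" using fm_eq_iff[OF z X, of "fm X z"] unfolding w_def by simp
  have "z * (1 - cnj X * w) = X - w" using e by (simp add: algebra_simps)
  then show ?thesis using fm_eq_iff[OF w1 X] unfolding w_def by simp
qed

lemma fm_ne:
  assumes z: "cmod z = 1" and X: "cmod X < 1"
  shows "fm X z \<noteq> z"
proof
  assume "fm X z = z"
  then have e: "z * (1 - cnj X * z) = X - z" using fm_eq_iff[OF z X] by simp
  have zz: "cnj z * z = 1" using circ_cnj[OF z] by (simp add: mult.commute)
  have "cnj z * (z * (1 - cnj X * z)) = cnj z * (X - z)" using e by simp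
  moreover have "cnj z * (z * (1 - cnj X * z)) = (cnj z * z) * (1 - cnj X * z)" by (simp only: mult.assoc)
  moreover have "cnj z * (X - z) = X * cnj z - cnj z * z" by (simp add: algebra_simps)
  ultimately have eq: "1 - cnj X * z = X * cnj z - 1" unfolding zz by simp
  have "Re (cnj X * z) = 1" using arg_cong[OF eq, of Re] by simp
  moreover have "Re (cnj X * z) \<le> cmod (cnj X * z)" by (rule complex_Re_le_cmod)
  moreover have "cmod (cnj X * z) < 1" using z X by (simp add: norm_mult)
  ultimately show False by simp
qed

lemma seg_imp:
  assumes a: "cmod a = 1" and b: "cmod b = 1" and X: "cmod X < 1"
    and s: "X \<in> closed_segment a b"
  shows "b = fm X a"
proof -
  obtain u where u: "X = (1 - u) *\<^sub>R a + u *\<^sub>R b" using s unfolding closed_segment_def by auto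
  have aa: "a * cnj a = 1" and bb: "b * cnj b = 1" using circ_cnj a b by auto
  have Xc: "X = of_real (1 - u) * a + of_real u * b" using u by (simp add: scaleR_conv_of_real)
  have cX: "cnj X = of_real (1 - u) * cnj a + of_real u * cnj b" unfolding Xc by simp
  have "b * (1 - cnj X * a) = b - of_real (1 - u) * (a * cnj a) * b - of_real u * (b * cnj b) * a"
    unfolding cX by (simp add: algebra_simps)
  also have "\<dots> = X - a" unfolding aa bb Xc by (simp add: algebra_simps)
  finally have "b * (1 - cnj X * a) = X - a" .
  then show ?thesis using fm_eq_iff[OF a X, of b] by simp
qed

lemma key_ident:
  fixes X a b ca cX :: complex
  assumes "b * (1 - cX * a) = X - a" "a * ca = 1"
  shows "((X - a) * (2 - cX * a - X * ca)) * (1 - cX * a) = ((X - a) * (cX - ca) * (b - a)) * (1 - cX * a)"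
  using assms by algebra

lemma imp_seg:
  assumes a: "cmod a = 1" and X: "cmod X < 1" and b: "b = fm X a"
  shows "X \<in> closed_segment a b"
proof -
  have b1: "cmod b = 1" unfolding b by (rule fm_circle[OF a X])
  have ba: "b \<noteq> a" unfolding b by (rule fm_ne[OF a X])
  have aa: "a * cnj a = 1" using circ_cnj a by auto
  have eb: "b * (1 - cnj X * a) = X - a" using fm_eq_iff[OF a X, of b] b by simp
  have nz: "1 - cnj X * a \<noteq> 0" by (rule den_nz[OF a X])
  define N where "N = (cmod (X - a))^2"
  define Dn where "Dn = 2 - 2 * Re (cnj X * a)"
  have Dpos: "Dn > 0"
  proof -
    have "Re (cnj X * a) \<le> cmod (cnj X * a)" by (rule complex_Re_le_cmod)
    moreover have "cmod (cnj X * a) < 1" using a X by (simp add: norm_mult)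
    ultimately show ?thesis unfolding Dn_def by simp
  qed
  have Nc: "complex_of_real N = (X - a) * (cnj X - cnj a)" unfolding N_def
    using complex_norm_square[of "X - a"] by simp
  have Dc: "complex_of_real Dn = 2 - cnj X * a - X * cnj a"
  proof -
    have "complex_of_real (2 * Re (cnj X * a)) = cnj X * a + X * cnj a"
      using complex_add_cnj[of "cnj X * a"] by simp
    then show ?thesis unfolding Dn_def by simp
  qed
  have "(X - a) * complex_of_real Dn = complex_of_real N * (b - a)"
    using key_ident[OF eb aa] nz unfolding Nc Dc by simp
  define u where "u = N / Dn"
  have Xu: "X = a + complex_of_real u * (b - a)"
  proof -
    have "X - a = complex_of_real N * (b - a) / complex_of_real Dn"
      using \<open>(X - a) * complex_of_real Dn = complex_of_real N * (b - a)\<close> Dpos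
      by (simp add: field_simps)
    then show ?thesis unfolding u_def by (simp add: field_simps)
  qed
  have a1: "(Re a)^2 + (Im a)^2 = 1" using a by (simp add: cmod_def)
  have b1': "(Re b)^2 + (Im b)^2 = 1" using b1 by (simp add: cmod_def)
  have "(Re X)^2 + (Im X)^2 = 1 - u * (1 - u) * ((Re b - Re a)^2 + (Im b - Im a)^2)"
  proof -
    have rx: "Re X = Re a + u * (Re b - Re a)" "Im X = Im a + u * (Im b - Im a)" using Xu by simp_all
    show ?thesis using a1 b1' unfolding rx by algebra
  qed
  moreover have "(Re X)^2 + (Im X)^2 < 1"
  proof -
    have "(cmod X)^2 < 1" using X by (simp add: power_less_one_iff abs_less_iff)
    then show ?thesis by (simp add: cmod_power2)
  qed
  moreover have "(Re b - Re a)^2 + (Im b - Im a)^2 > 0"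
  proof -
    have "Re b - Re a \<noteq> 0 \<or> Im b - Im a \<noteq> 0" using ba by (auto simp: complex_eq_iff)
    then show ?thesis by (auto simp: add_pos_nonneg add_nonneg_pos)
  qed
  ultimately have "u * (1 - u) > 0" by (smt (verit) mult_nonpos_nonneg mult_pos_pos zero_less_mult_iff)
  then have u01: "0 \<le> u" "u \<le> 1" by (auto simp: zero_less_mult_iff)
  have "X = (1 - u) *\<^sub>R a + u *\<^sub>R b" unfolding Xu by (simp add: scaleR_conv_of_real algebra_simps)
  then show ?thesis unfolding closed_segment_def using u01 by auto
qed

lemma seg_iff:
  assumes a: "cmod a = 1" and b: "cmod b = 1" and X: "cmod X < 1"
  shows "X \<in> closed_segment a b \<longleftrightarrow> b = fm X a"
  using seg_imp[OF a b X] imp_seg[OF a X] by blast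

definition Fix :: "complex \<Rightarrow> complex \<Rightarrow> complex \<Rightarrow> complex set" where
  "Fix P Q R = {a. cmod a = 1 \<and> fm R (fm Q (fm P a)) = a}"

lemma tri_eq:
  assumes P: "cmod P < 1" and Q: "cmod Q < 1" and R: "cmod R < 1"
  shows "circumscribing_inscribed_triangles P Q R = (\<lambda>a. {a, fm P a, fm Q (fm P a)}) ` Fix P Q R"
proof
  show "circumscribing_inscribed_triangles P Q R \<subseteq> (\<lambda>a. {a, fm P a, fm Q (fm P a)}) ` Fix P Q R"
  proof
    fix T assume "T \<in> circumscribing_inscribed_triangles P Q R"
    then obtain a b c where T: "T = {a, b, c}" and abc: "cmod a = 1" "cmod b = 1" "cmod c = 1"
      and s: "P \<in> closed_segment a b" "Q \<in> closed_segment b c" "R \<in> closed_segment c a"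
      unfolding circumscribing_inscribed_triangles_def circle_S1_def by blast
    have b: "b = fm P a" using seg_iff[OF abc(1,2) P] s(1) by simp
    have c: "c = fm Q b" using seg_iff[OF abc(2,3) Q] s(2) by simp
    have a: "a = fm R c" using seg_iff[OF abc(3,1) R] s(3) by simp
    have "fm R (fm Q (fm P a)) = a" unfolding b[symmetric] c[symmetric] a[symmetric] ..
    then have "a \<in> Fix P Q R" unfolding Fix_def using abc(1) by blast
    moreover have "T = {a, fm P a, fm Q (fm P a)}" unfolding T b c ..
    ultimately show "T \<in> (\<lambda>a. {a, fm P a, fm Q (fm P a)}) ` Fix P Q R" by (rule rev_image_eqI)
  qed
next
  show "(\<lambda>a. {a, fm P a, fm Q (fm P a)}) ` Fix P Q R \<subseteq> circumscribing_inscribed_triangles P Q R"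
  proof
    fix T assume "T \<in> (\<lambda>a. {a, fm P a, fm Q (fm P a)}) ` Fix P Q R"
    then obtain a where a: "cmod a = 1" "fm R (fm Q (fm P a)) = a" and T: "T = {a, fm P a, fm Q (fm P a)}"
      unfolding Fix_def by blast
    define b where "b = fm P a"
    define c where "c = fm Q b"
    have b1: "cmod b = 1" unfolding b_def by (rule fm_circle[OF a(1) P])
    have c1: "cmod c = 1" unfolding c_def by (rule fm_circle[OF b1 Q])
    have ac: "fm R c = a" using a(2) unfolding c_def b_def .
    have d1: "a \<noteq> b" unfolding b_def using fm_ne[OF a(1) P] by metis
    have d2: "b \<noteq> c" unfolding c_def using fm_ne[OF b1 Q] by metis
    have d3: "a \<noteq> c" using fm_ne[OF c1 R] ac by metis
    have s1: "P \<in> closed_segment a b" using seg_iff[OF a(1) b1 P] b_def by simp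
    have s2: "Q \<in> closed_segment b c" using seg_iff[OF b1 c1 Q] c_def by simp
    have s3: "R \<in> closed_segment c a" using seg_iff[OF c1 a(1) R] ac by simp
    have T': "T = {a, b, c}" unfolding T b_def c_def ..
    have "\<exists>a' b' c'. T = {a', b', c'} \<and> a' \<noteq> b' \<and> b' \<noteq> c' \<and> a' \<noteq> c' \<and>
        a' \<in> circle_S1 \<and> b' \<in> circle_S1 \<and> c' \<in> circle_S1 \<and>
        P \<in> closed_segment a' b' \<and> Q \<in> closed_segment b' c' \<and> R \<in> closed_segment c' a'"
      apply (rule exI[of _ a], rule exI[of _ b], rule exI[of _ c])
      using T' a(1) b1 c1 d1 d2 d3 s1 s2 s3 unfolding circle_S1_def by simp
    then show "T \<in> circumscribing_inscribed_triangles P Q R"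
      unfolding circumscribing_inscribed_triangles_def by (rule CollectI)
  qed
qed

lemma tri_inj:
  assumes P: "cmod P < 1" and Q: "cmod Q < 1" and R: "cmod R < 1"
  shows "inj_on (\<lambda>a. {a, fm P a, fm Q (fm P a)}) (Fix P Q R)"
proof
  fix a a' assume aF: "a \<in> Fix P Q R" and a'F: "a' \<in> Fix P Q R"
    and eq: "{a, fm P a, fm Q (fm P a)} = {a', fm P a', fm Q (fm P a')}"
  have a1: "cmod a = 1" and a'1: "cmod a' = 1" using aF a'F unfolding Fix_def by auto
  define b where "b = fm P a" define c where "c = fm Q b"
  define b' where "b' = fm P a'" define c' where "c' = fm Q b'"
  have b1: "cmod b = 1" unfolding b_def by (rule fm_circle[OF a1 P])
  have c1: "cmod c = 1" unfolding c_def by (rule fm_circle[OF b1 Q])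
  have b'1: "cmod b' = 1" unfolding b'_def by (rule fm_circle[OF a'1 P])
  have ac: "fm R c = a" using aF unfolding Fix_def c_def b_def by simp
  have d1: "a \<noteq> b" unfolding b_def using fm_ne[OF a1 P] by metis
  have d2: "b \<noteq> c" unfolding c_def using fm_ne[OF b1 Q] by metis
  have d3: "a \<noteq> c" using fm_ne[OF c1 R] ac by metis
  have d1': "a' \<noteq> b'" unfolding b'_def using fm_ne[OF a'1 P] by metis
  have d2': "b' \<noteq> c'" unfolding c'_def using fm_ne[OF b'1 Q] by metis
  have c'1: "cmod c' = 1" unfolding c'_def by (rule fm_circle[OF b'1 Q])
  have ac2: "fm R c' = a'" using a'F unfolding Fix_def c'_def b'_def by simp
  have d3': "a' \<noteq> c'" using fm_ne[OF c'1 R] ac2 by metis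
  have E: "{a, b, c} = {a', b', c'}" using eq unfolding b_def c_def b'_def c'_def .
  have "a' \<in> {a, b, c}" using E by blast
  moreover have "a' \<noteq> b"
  proof
    assume ab: "a' = b"
    have bb: "b' = a" unfolding b'_def ab b_def by (rule fm_invol[OF a1 P])
    have "c' \<in> {a, b, c}" using E by blast
    moreover have "c' \<noteq> a" using d2' bb by simp
    moreover have "c' \<noteq> b" using d3' ab by simp
    ultimately have "c' = c" by blast
    then have "fm Q a = fm Q b" unfolding c'_def c_def bb .
    then have "fm Q (fm Q a) = fm Q (fm Q b)" by simp
    then have "a = b" using fm_invol[OF a1 Q] fm_invol[OF b1 Q] by simp
    then show False using d1 by simp
  qed
  moreover have "a' \<noteq> c"
  proof
    assume ac': "a' = c"
    have "b' \<in> {a, b, c}" using E by blast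
    moreover have "b' \<noteq> c" using d1' ac' by simp
    moreover have "b' \<noteq> a"
    proof
      assume "b' = a"
      then have "fm P c = a" unfolding b'_def ac' .
      then have "fm P (fm P c) = fm P a" by simp
      then have "c = b" using fm_invol[OF c1 P] unfolding b_def by simp
      then show False using d2 by simp
    qed
    moreover have "b' \<noteq> b"
    proof
      assume "b' = b"
      then have "fm P c = fm P a" unfolding b'_def ac' b_def .
      then have "fm P (fm P c) = fm P (fm P a)" by simp
      then have "c = a" using fm_invol[OF c1 P] fm_invol[OF a1 P] by simp
      then show False using d3 by simp
    qed
    ultimately show False by blast
  qed
  ultimately show "a = a'" by blast
qed

lemma fm_swap:
  assumes w: "cmod w = 1" and z: "cmod z = 1" and X: "cmod X < 1"
  shows "fm X w = z \<longleftrightarrow> w = fm X z"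
  using fm_invol[OF w X] fm_invol[OF z X] by metis

lemma fm_frac:
  fixes n d :: complex
  assumes "d \<noteq> 0" "d - cnj Q * n \<noteq> 0"
  shows "fm Q (n / d) = (Q * d - n) / (d - cnj Q * n)"
proof -
  have "1 - cnj Q * (n / d) = (d - cnj Q * n) / d" using assms by (simp add: field_simps)
  moreover have "Q - n / d = (Q * d - n) / d" using assms by (simp add: field_simps)
  ultimately show ?thesis unfolding fm_def using assms by simp
qed

lemma fix_poly:
  assumes P: "cmod P < 1" and Q: "cmod Q < 1" and R: "cmod R < 1" and z: "cmod z = 1"
  defines "\<alpha> \<equiv> -1 + Q * cnj P + R * cnj Q - R * cnj P"
    and "\<beta> \<equiv> P - Q + R - R * cnj Q * P"
  shows "fm R (fm Q (fm P z)) = z \<longleftrightarrow> cnj \<beta> * z^2 + (\<alpha> + cnj \<alpha>) * z + \<beta> = 0"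
proof -
  have w1: "cmod (fm P z) = 1" by (rule fm_circle[OF z P])
  have w2: "cmod (fm Q (fm P z)) = 1" by (rule fm_circle[OF w1 Q])
  have v1: "cmod (fm R z) = 1" by (rule fm_circle[OF z R])
  have v2: "cmod (fm Q (fm R z)) = 1" by (rule fm_circle[OF v1 Q])
  have "fm R (fm Q (fm P z)) = z \<longleftrightarrow> fm Q (fm P z) = fm R z" by (rule fm_swap[OF w2 z R])
  also have "\<dots> \<longleftrightarrow> fm P z = fm Q (fm R z)" by (rule fm_swap[OF w1 v1 Q])
  also have "\<dots> \<longleftrightarrow> cnj \<beta> * z^2 + (\<alpha> + cnj \<alpha>) * z + \<beta> = 0"
  proof -
    define d where "d = 1 - cnj R * z"
    define n where "n = R - z"
    have d0: "d \<noteq> 0" unfolding d_def by (rule den_nz[OF z R])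
    have e0: "1 - cnj Q * fm R z \<noteq> 0" by (rule den_nz[OF v1 Q])
    have p0: "1 - cnj P * z \<noteq> 0" by (rule den_nz[OF z P])
    have fr: "fm R z = n / d" unfolding fm_def n_def d_def ..
    have dd: "d - cnj Q * n = d * (1 - cnj Q * fm R z)" unfolding fr using d0 by (simp add: field_simps)
    have dn0: "d - cnj Q * n \<noteq> 0" unfolding dd using d0 e0 by simp
    have fq: "fm Q (fm R z) = (Q * d - n) / (d - cnj Q * n)"
      unfolding fr using fm_frac[OF d0 dn0] .
    have "fm P z = fm Q (fm R z) \<longleftrightarrow> (P - z) * (d - cnj Q * n) = (Q * d - n) * (1 - cnj P * z)"
      unfolding fq using p0 dn0 by (simp add: frac_eq_eq fm_def)
    also have "\<dots> \<longleftrightarrow> (P - z) * (d - cnj Q * n) - (Q * d - n) * (1 - cnj P * z) = 0" by simp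
    also have "(P - z) * (d - cnj Q * n) - (Q * d - n) * (1 - cnj P * z) = cnj \<beta> * z^2 + (\<alpha> + cnj \<alpha>) * z + \<beta>"
      unfolding \<alpha>_def \<beta>_def d_def n_def by (simp add: algebra_simps power2_eq_square)
    finally show ?thesis .
  qed
  finally show ?thesis .
qed

lemma cmod1_iff: "cmod w = 1 \<longleftrightarrow> (Re w)^2 + (Im w)^2 = 1"
  by (simp add: cmod_def)

lemma W_card:
  fixes m :: real
  shows "finite {w. cmod w = 1 \<and> Re w = m} \<and>
    card {w. cmod w = 1 \<and> Re w = m} = (if m^2 < 1 then 2 else if m^2 = 1 then 1 else 0)"
proof -
  define s where "s = sqrt (1 - m^2)"
  have S: "{w. cmod w = 1 \<and> Re w = m} = {w. Re w = m \<and> (Im w)^2 = 1 - m^2}"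
    unfolding cmod1_iff by auto
  consider "m^2 < 1" | "m^2 = 1" | "m^2 > 1" by linarith
  then show ?thesis
  proof cases
    case 1
    have s0: "s > 0" unfolding s_def using 1 by simp
    have s2: "s^2 = 1 - m^2" unfolding s_def using 1 by simp
    have "{w. Re w = m \<and> (Im w)^2 = 1 - m^2} = {Complex m s, Complex m (-s)}"
    proof (intro set_eqI iffI)
      fix w assume "w \<in> {w. Re w = m \<and> (Im w)^2 = 1 - m^2}"
      then have "Re w = m" "(Im w)^2 = s^2" using s2 by auto
      then have "Re w = m" "Im w = s \<or> Im w = -s" using power2_eq_iff by blast+
      then show "w \<in> {Complex m s, Complex m (-s)}" by (auto simp: complex_eq_iff)
    next
      fix w assume "w \<in> {Complex m s, Complex m (-s)}"
      then show "w \<in> {w. Re w = m \<and> (Im w)^2 = 1 - m^2}" using s2 by auto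
    qed
    moreover have "Complex m s \<noteq> Complex m (-s)" using s0 by simp
    ultimately show ?thesis unfolding S using 1 by simp
  next
    case 2
    have "{w. Re w = m \<and> (Im w)^2 = 1 - m^2} = {Complex m 0}"
      using 2 by (auto simp: complex_eq_iff)
    then show ?thesis unfolding S using 2 by simp
  next
    case 3
    have E3: "{w. Re w = m \<and> (Im w)^2 = 1 - m^2} = {}"
    proof -
      { fix w :: complex assume "(Im w)^2 = 1 - m^2"
        moreover have "(Im w)^2 \<ge> 0" by simp
        ultimately have False using 3 by linarith }
      then show ?thesis by auto
    qed
    show ?thesis unfolding S E3 using 3 by simp
  qed
qed

lemma circle_line_card:
  fixes \<beta> :: complex and k :: real
  assumes b0: "\<beta> \<noteq> 0"
  shows "finite {z. cmod z = 1 \<and> Re (cnj \<beta> * z) = k} \<and>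
    card {z. cmod z = 1 \<and> Re (cnj \<beta> * z) = k} = (if k^2 < (cmod \<beta>)^2 then 2 else if k^2 = (cmod \<beta>)^2 then 1 else 0)"
proof -
  define r where "r = cmod \<beta>"
  have r0: "r > 0" unfolding r_def using b0 by simp
  define e where "e = \<beta> / of_real r"
  have ee: "e * cnj e = 1"
  proof -
    have "\<beta> * cnj \<beta> = of_real (r^2)" unfolding r_def using complex_norm_square[of \<beta>] by simp
    then show ?thesis unfolding e_def using r0 by (simp add: field_simps power2_eq_square)
  qed
  have ce: "cnj \<beta> * e = of_real r"
  proof -
    have "\<beta> * cnj \<beta> = of_real (r^2)" unfolding r_def using complex_norm_square[of \<beta>] by simp
    then show ?thesis unfolding e_def using r0 by (simp add: field_simps power2_eq_square)
  qed
  have cme: "cmod e = 1" unfolding e_def r_def using b0 by (simp add: norm_divide)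
  define m where "m = k / r"
  have SE: "{z. cmod z = 1 \<and> Re (cnj \<beta> * z) = k} = (\<lambda>w. e * w) ` {w. cmod w = 1 \<and> Re w = m}"
  proof (intro set_eqI iffI)
    fix z assume "z \<in> {z. cmod z = 1 \<and> Re (cnj \<beta> * z) = k}"
    then have z: "cmod z = 1" "Re (cnj \<beta> * z) = k" by auto
    define w where "w = cnj e * z"
    have zw: "z = e * w" unfolding w_def using ee by (simp add: mult.assoc[symmetric])
    have "cmod w = 1" unfolding w_def using z cme by (simp add: norm_mult)
    moreover have "Re w = m"
    proof -
      have "cnj \<beta> * z = of_real r * w" unfolding zw ce[symmetric] by simp
      then have "k = r * Re w" using z(2) by simp
      then show ?thesis unfolding m_def using r0 by simp
    qed
    ultimately show "z \<in> (\<lambda>w. e * w) ` {w. cmod w = 1 \<and> Re w = m}" using zw by blast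
  next
    fix z assume "z \<in> (\<lambda>w. e * w) ` {w. cmod w = 1 \<and> Re w = m}"
    then obtain w where w: "cmod w = 1" "Re w = m" "z = e * w" by blast
    have "cmod z = 1" using w cme by (simp add: norm_mult)
    moreover have "cnj \<beta> * z = of_real r * w" unfolding w(3) mult.assoc[symmetric] ce ..
    then have "Re (cnj \<beta> * z) = k" using w(2) r0 unfolding m_def by simp
    ultimately show "z \<in> {z. cmod z = 1 \<and> Re (cnj \<beta> * z) = k}" by simp
  qed
  have inj: "inj_on (\<lambda>w. e * w) {w. cmod w = 1 \<and> Re w = m}"
  proof -
    have "e \<noteq> 0" using cme by auto
    then show ?thesis by (intro inj_onI) simp
  qed
  have mm: "m^2 < 1 \<longleftrightarrow> k^2 < r^2" "m^2 = 1 \<longleftrightarrow> k^2 = r^2"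
  proof -
    have m2: "m^2 = k^2 / r^2" unfolding m_def by (simp add: power_divide)
    have r2: "r^2 > 0" using r0 by simp
    show "m^2 < 1 \<longleftrightarrow> k^2 < r^2" unfolding m2 using r2 by (simp add: divide_less_eq)
    show "m^2 = 1 \<longleftrightarrow> k^2 = r^2" unfolding m2 using r2 by (simp add: divide_eq_eq)
  qed
  show ?thesis unfolding SE r_def[symmetric] using W_card[of m] inj mm
    by (simp add: finite_image_iff card_image)
qed

lemma disk_sq': "cmod z < 1 \<Longrightarrow> (Re z)^2 + (Im z)^2 < 1"
proof -
  assume "cmod z < 1"
  then have "(cmod z)^2 < 1" by (simp add: power_less_one_iff abs_less_iff)
  then show ?thesis by (simp add: cmod_power2)
qed

lemma det_ident:
  fixes P Q R :: complex
  shows "(P - Q + R - R * cnj Q * P) * cnj (P - Q + R - R * cnj Q * P) =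
     (-1 + Q * cnj P + R * cnj Q - R * cnj P) * cnj (-1 + Q * cnj P + R * cnj Q - R * cnj P)
     - (1 - P * cnj P) * (1 - Q * cnj Q) * (1 - R * cnj R)"
  by (simp add: algebra_simps)

lemma beta0_ident:
  fixes P Q R cP cQ :: complex
  assumes "P - Q + R - R * cQ * P = 0"
  shows "(-1 + Q * cP + R * cQ - R * cP) * (1 - cQ * P) = - ((1 - P * cP) * (1 - Q * cQ))"
proof -
  have h: "R - R * cQ * P = Q - P" using assms by algebra
  have "(-1 + Q * cP + R * cQ - R * cP) * (1 - cQ * P) = (-1 + Q * cP) * (1 - cQ * P) + (cQ - cP) * (R - R * cQ * P)"
    by (simp add: algebra_simps)
  also have "\<dots> = (-1 + Q * cP) * (1 - cQ * P) + (cQ - cP) * (Q - P)" unfolding h ..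
  also have "\<dots> = - ((1 - P * cP) * (1 - Q * cQ))" by (simp add: algebra_simps)
  finally show ?thesis .
qed

lemma Fix_card:
  assumes P: "cmod P < 1" and Q: "cmod Q < 1" and R: "cmod R < 1"
  defines "\<alpha> \<equiv> -1 + Q * cnj P + R * cnj Q - R * cnj P"
    and "\<beta> \<equiv> P - Q + R - R * cnj Q * P"
    and "D \<equiv> (1 - (Re P)^2 - (Im P)^2) * (1 - (Re Q)^2 - (Im Q)^2) * (1 - (Re R)^2 - (Im R)^2)"
  shows "finite (Fix P Q R) \<and> card (Fix P Q R) = (if (Im \<alpha>)^2 < D then 0 else if (Im \<alpha>)^2 = D then 1 else 2)"
proof -
  have FE: "Fix P Q R = {z. cmod z = 1 \<and> Re (cnj \<beta> * z) = - Re \<alpha>}"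
  proof (intro set_eqI)
    fix z
    show "z \<in> Fix P Q R \<longleftrightarrow> z \<in> {z. cmod z = 1 \<and> Re (cnj \<beta> * z) = - Re \<alpha>}"
    proof (cases "cmod z = 1")
      case False then show ?thesis unfolding Fix_def by simp
    next
      case z: True
      have zz: "z * cnj z = 1" by (rule circ_cnj[OF z])
      have z0: "z \<noteq> 0" using z by auto
      have c1: "cnj \<beta> * z + \<beta> * cnj z = of_real (2 * Re (cnj \<beta> * z))"
        using complex_add_cnj[of "cnj \<beta> * z"] by simp
      have c2: "\<alpha> + cnj \<alpha> = of_real (2 * Re \<alpha>)" using complex_add_cnj[of \<alpha>] by simp
      have "cnj \<beta> * z^2 + (\<alpha> + cnj \<alpha>) * z + \<beta> = z * (cnj \<beta> * z + \<beta> * cnj z + (\<alpha> + cnj \<alpha>))"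
      proof -
        have "z * (\<beta> * cnj z) = \<beta>" using zz by (simp add: mult.left_commute)
        then show ?thesis by (simp add: algebra_simps power2_eq_square)
      qed
      also have "\<dots> = z * of_real (2 * Re (cnj \<beta> * z) + 2 * Re \<alpha>)" unfolding c1 c2 by simp
      finally have pe: "cnj \<beta> * z^2 + (\<alpha> + cnj \<alpha>) * z + \<beta> = z * of_real (2 * Re (cnj \<beta> * z) + 2 * Re \<alpha>)" .
      have "z \<in> Fix P Q R \<longleftrightarrow> cnj \<beta> * z^2 + (\<alpha> + cnj \<alpha>) * z + \<beta> = 0"
        unfolding Fix_def using fix_poly[OF P Q R z] z unfolding \<alpha>_def \<beta>_def by simp
      also have "\<dots> \<longleftrightarrow> Re (cnj \<beta> * z) = - Re \<alpha>"
      proof -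
        have gz: "\<And>x. z * complex_of_real x = 0 \<longleftrightarrow> x = 0" using z0 by simp
        show ?thesis unfolding pe gz by linarith
      qed
      finally show ?thesis using z by simp
    qed
  qed
  have rP: "P * cnj P = of_real ((Re P)^2 + (Im P)^2)" by (simp add: complex_mult_cnj)
  have rQ: "Q * cnj Q = of_real ((Re Q)^2 + (Im Q)^2)" by (simp add: complex_mult_cnj)
  have rR: "R * cnj R = of_real ((Re R)^2 + (Im R)^2)" by (simp add: complex_mult_cnj)
  have Dc: "(1 - P * cnj P) * (1 - Q * cnj Q) * (1 - R * cnj R) = of_real D"
    unfolding rP rQ rR D_def by (simp add: diff_diff_eq)
  have nb: "(cmod \<beta>)^2 = (Re \<alpha>)^2 + (Im \<alpha>)^2 - D"
  proof -
    have "\<beta> * cnj \<beta> = \<alpha> * cnj \<alpha> - of_real D" unfolding \<alpha>_def \<beta>_def Dc[symmetric] by (rule det_ident)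
    then have "complex_of_real ((cmod \<beta>)^2) = of_real ((cmod \<alpha>)^2 - D)"
      using complex_norm_square[of \<beta>] complex_norm_square[of \<alpha>] by simp
    then have "(cmod \<beta>)^2 = (cmod \<alpha>)^2 - D" using of_real_eq_iff by blast
    then show ?thesis by (simp add: cmod_power2)
  qed
  have f3: "1 - (Re P)^2 - (Im P)^2 > 0" "1 - (Re Q)^2 - (Im Q)^2 > 0" "1 - (Re R)^2 - (Im R)^2 > 0"
    using disk_sq'[OF P] disk_sq'[OF Q] disk_sq'[OF R] by simp_all
  have Dpos: "D > 0" unfolding D_def using f3 by simp
  show ?thesis
  proof (cases "\<beta> = 0")
    case False
    note CL = circle_line_card[OF False, of "- Re \<alpha>"]
    have "(- Re \<alpha>)^2 < (cmod \<beta>)^2 \<longleftrightarrow> D < (Im \<alpha>)^2" unfolding nb by simp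
    moreover have "(- Re \<alpha>)^2 = (cmod \<beta>)^2 \<longleftrightarrow> (Im \<alpha>)^2 = D" unfolding nb by auto
    ultimately show ?thesis unfolding FE using CL by auto
  next
    case True
    have ra: "Re \<alpha> \<noteq> 0"
    proof
      assume ra0: "Re \<alpha> = 0"
      have eq: "\<alpha> * (1 - cnj Q * P) = - ((1 - P * cnj P) * (1 - Q * cnj Q))"
        using beta0_ident[of P Q R "cnj Q" "cnj P"] True unfolding \<alpha>_def \<beta>_def by simp
      have ab: "(1 - P * cnj P) * (1 - Q * cnj Q) = of_real ((1 - (Re P)^2 - (Im P)^2) * (1 - (Re Q)^2 - (Im Q)^2))"
        unfolding rP rQ by (simp add: diff_diff_eq)
      have pos: "(1 - (Re P)^2 - (Im P)^2) * (1 - (Re Q)^2 - (Im Q)^2) > 0"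
        using f3 by simp
      have "Im (\<alpha> * (1 - cnj Q * P)) = 0" unfolding eq ab by simp
      then have "Im \<alpha> * (1 - (Re Q * Re P + Im Q * Im P)) = 0" using ra0 by simp
      moreover have "Re Q * Re P + Im Q * Im P < 1"
      proof -
        have "Re (cnj Q * P) \<le> cmod (cnj Q * P)" by (rule complex_Re_le_cmod)
        moreover have "cmod (cnj Q * P) < 1"
        proof -
          have "cmod Q * cmod P \<le> cmod Q * 1" using P by (intro mult_left_mono) auto
          then show ?thesis using Q by (simp add: norm_mult)
        qed
        ultimately show ?thesis by simp
      qed
      ultimately have "Im \<alpha> = 0" by simp
      then have "\<alpha> = 0" using ra0 by (simp add: complex_eq_iff)
      define r2 where "r2 = (1 - (Re P)^2 - (Im P)^2) * (1 - (Re Q)^2 - (Im Q)^2)"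
      have "complex_of_real r2 = 0" using eq \<open>\<alpha> = 0\<close> ab unfolding r2_def[symmetric] by simp
      then show False using pos unfolding r2_def[symmetric] by simp
    qed
    have "Fix P Q R = {}" unfolding FE using True ra by auto
    moreover have "(Im \<alpha>)^2 < D"
    proof -
      have "(Re \<alpha>)^2 > 0" using ra by simp
      moreover have "(cmod \<beta>)^2 = 0" using True by simp
      ultimately show ?thesis using nb by linarith
    qed
    ultimately show ?thesis by simp
  qed
qed

theorem theorem3p1:
  fixes P Q R :: complex
  assumes "P \<in> klein_disk" and "Q \<in> klein_disk" and "R \<in> klein_disk"
    and "\<not> collinear {P, Q, R}"
  shows "finite (circumscribing_inscribed_triangles P Q R) \<and>
         card (circumscribing_inscribed_triangles P Q R) =
           (if delta_dist P Q R < Delta' P Q then 0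
            else if delta_dist P Q R = Delta' P Q then 1 else 2)"
proof -
  have P: "cmod P < 1" and Q: "cmod Q < 1" and R: "cmod R < 1" using assms(1-3) unfolding klein_disk_def by auto
  have ne: "P \<noteq> Q"
  proof
    assume "P = Q"
    then have "collinear {P, Q, R}" by (simp add: collinear_2)
    then show False using assms(4) by simp
  qed
  define A where "A = Im (Q * cnj P) + Im (R * cnj Q) - Im (R * cnj P)"
  define D where "D = (1 - (Re P)^2 - (Im P)^2) * (1 - (Re Q)^2 - (Im Q)^2) * (1 - (Re R)^2 - (Im R)^2)"
  have DV: "(delta_dist P Q R < Delta' P Q \<longleftrightarrow> A^2 < D) \<and> (delta_dist P Q R = Delta' P Q \<longleftrightarrow> A^2 = D)"
    using delta_vs_Delta[OF P Q R ne] unfolding A_def D_def .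
  have Im_al: "Im (-1 + Q * cnj P + R * cnj Q - R * cnj P) = A" unfolding A_def by simp
  have FC: "finite (Fix P Q R) \<and> card (Fix P Q R) = (if A^2 < D then 0 else if A^2 = D then 1 else 2)"
    using Fix_card[OF P Q R] unfolding D_def Im_al[symmetric] .
  have TE: "circumscribing_inscribed_triangles P Q R = (\<lambda>a. {a, fm P a, fm Q (fm P a)}) ` Fix P Q R"
    by (rule tri_eq[OF P Q R])
  have inj: "inj_on (\<lambda>a. {a, fm P a, fm Q (fm P a)}) (Fix P Q R)" by (rule tri_inj[OF P Q R])
  have "finite (circumscribing_inscribed_triangles P Q R) \<and>
        card (circumscribing_inscribed_triangles P Q R) = card (Fix P Q R)"
    unfolding TE using FC inj by (simp add: card_image)
  then have C: "finite (circumscribing_inscribed_triangles P Q R) \<and>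
        card (circumscribing_inscribed_triangles P Q R) = (if A^2 < D then 0 else if A^2 = D then 1 else 2)"
    using FC by simp
  have d1: "delta_dist P Q R < Delta' P Q \<longleftrightarrow> A^2 < D" using DV by blast
  have d2: "delta_dist P Q R = Delta' P Q \<longleftrightarrow> A^2 = D" using DV by blast
  show ?thesis unfolding d1 d2 by (rule C)
qed


end
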